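(* Let $0<\underline\theta<\overline\theta<\infty$ and let the buyer of type $\theta\in[\underline\theta,\overline\theta]$ have utility $u(t,q;\theta)=\theta q-qt$ on $\mathbb{Z}$. Let $\theta$ have distribution $\Gamma$ with continuous, strictly positive density $\gamma$ on $[\underline\theta,\overline\theta]$, with nondecreasing hazard rate: $\frac{\gamma(\theta')}{1-\Gamma(\theta')}\le\frac{\gamma(\theta'')}{1-\Gamma(\theta'')}$ for $\theta'<\theta''$. Let $\mathcal F$ be the set of mechanisms $F=(t,q):[\underline\theta,\overline\theta]\to[0,\overline\theta]\times[0,1]$ with finite range that are strategy-proof ($u(F(\theta);\theta)\ge u(F(\theta');\theta)$ for all $\theta,\theta'$), individually rational ($u(F(\theta);\theta)\ge0$), and satisfy: $u(F(\theta);\theta)=0$ implies $F(\theta)=(0,0)$. The seller's expected revenue is $E(F)=\int_{\underline\theta}^{\overline\theta}q(\theta)t(\theta)\gamma(\theta)\,d\theta$. Then a revenue-maximizing $F^*\in\mathcal F$ exists and is deterministic: there is $\theta^*\in[\underline\theta,\overline\theta]$ with $F^*(\theta)=(0,0)$ for $\theta\in[\underline\theta,\theta^*]$ and $F^*(\theta)=(\theta^*,1)$ for $\theta\in(\theta^*,\overline\theta]$.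
   Context: $\mathbb{Z}=[0,\infty)\times[0,1]$; $q$ is the probability of winning an indivisible object, $t$ is the payment made upon winning, and $\theta$ is the valuation. *)

theory Defs
  imports "HOL-Analysis.Analysis"
begin

definition util :: "real \<times> real \<Rightarrow> real \<Rightarrow> real" where
  "util z \<theta> = \<theta> * snd z - snd z * fst z"

definition admissible :: "real \<Rightarrow> real \<Rightarrow> (real \<Rightarrow> real \<times> real) \<Rightarrow> bool" where
  "admissible lo hi F \<longleftrightarrow>
     F ` {lo..hi} \<subseteq> {0..hi} \<times> {0..1} \<and>
     finite (F ` {lo..hi}) \<and>
     (\<forall>\<theta>\<in>{lo..hi}. \<forall>\<theta>'\<in>{lo..hi}. util (F \<theta>) \<theta> \<ge> util (F \<theta>') \<theta>) \<and>
     (\<forall>\<theta>\<in>{lo..hi}. util (F \<theta>) \<theta> \<ge> 0) \<and>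
     (\<forall>\<theta>\<in>{lo..hi}. util (F \<theta>) \<theta> = 0 \<longrightarrow> F \<theta> = (0, 0))"

definition revenue :: "real \<Rightarrow> real \<Rightarrow> (real \<Rightarrow> real) \<Rightarrow> (real \<Rightarrow> real \<times> real) \<Rightarrow> real" where
  "revenue lo hi \<gamma> F = integral {lo..hi} (\<lambda>\<theta>. snd (F \<theta>) * fst (F \<theta>) * \<gamma> \<theta>)"

definition cdf :: "real \<Rightarrow> (real \<Rightarrow> real) \<Rightarrow> real \<Rightarrow> real" where
  "cdf lo \<gamma> x = integral {lo..x} \<gamma>"

end

theory Submission
  imports Defs
begin

lemma ind_integral:
  fixes lo hi p :: real
  assumes cont: "continuous_on {lo..hi} \<gamma>"
  shows "((\<lambda>\<theta>. if p \<le> \<theta> then p * \<gamma> \<theta> else 0) has_integral (p * integral {max p lo..hi} \<gamma>)) {lo..hi}"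
proof -
  have sub: "{max p lo..hi} \<subseteq> {lo..hi}" by auto
  have "\<gamma> integrable_on {max p lo..hi}"
    by (rule integrable_continuous_real) (rule continuous_on_subset[OF cont sub])
  hence "((\<lambda>x. p * \<gamma> x) has_integral (p * integral {max p lo..hi} \<gamma>)) {max p lo..hi}"
    by (intro has_integral_mult_right) (rule integrable_integral)
  hence "((\<lambda>x. if x \<in> {max p lo..hi} then p * \<gamma> x else 0) has_integral (p * integral {max p lo..hi} \<gamma>)) {lo..hi}"
    by (simp only: has_integral_restrict[OF sub])
  then show ?thesis
    by (rule has_integral_spike[OF negligible_empty, rotated]) auto
qed

lemma mono_choice:
  fixes t1 t2 a1 a2 P1 P2 :: real
  assumes "t2 * a2 - P2 \<ge> t2 * a1 - P1" "t1 * a1 - P1 \<ge> t1 * a2 - P2" "a1 < a2"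
  shows "t1 \<le> t2"
proof -
  have "(t2 - t1) * (a2 - a1) \<ge> 0" using assms by (simp add: algebra_simps)
  thus ?thesis using assms(3) by (simp add: zero_le_mult_iff)
qed

lemma rev_bound:
  fixes lo hi M :: real and \<gamma> :: "real \<Rightarrow> real" and F :: "real \<Rightarrow> real \<times> real"
  assumes lo: "0 < lo" and cont: "continuous_on {lo..hi} \<gamma>"
    and gpos: "\<And>x. x \<in> {lo..hi} \<Longrightarrow> \<gamma> x > 0"
    and adm: "admissible lo hi F"
    and Mb: "\<And>p. p * integral {max p lo..hi} \<gamma> \<le> M" and M0: "M \<ge> 0"
  shows "revenue lo hi \<gamma> F \<le> M"
proof -
  define T where "T = {lo..hi}"
  define a where "a \<theta> = snd (F \<theta>)" for \<theta>
  define Q where "Q = a ` T"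
  from adm have rng: "F ` T \<subseteq> {0..hi} \<times> {0..1}" and fin: "finite (F ` T)"
    and ic: "\<forall>\<theta>\<in>T. \<forall>\<theta>'\<in>T. util (F \<theta>) \<theta> \<ge> util (F \<theta>') \<theta>"
    and ir: "\<forall>\<theta>\<in>T. util (F \<theta>) \<theta> \<ge> 0"
    unfolding admissible_def T_def by auto
  have "finite (snd ` F ` T)" using fin by (rule finite_imageI)
  then have finQ: "finite Q" unfolding Q_def a_def by (simp add: image_image)
  have Qr: "0 \<le> x \<and> x \<le> 1" if "x \<in> Q" for x using rng that unfolding Q_def a_def by auto
  define pay where "pay x = x * fst (F (SOME \<theta>. \<theta> \<in> T \<and> a \<theta> = x))" for x
  have pay0: "pay 0 = 0" by (simp add: pay_def)
  have payeq: "a \<theta> * fst (F \<theta>) = pay (a \<theta>)" if "\<theta> \<in> T" for \<theta>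
  proof -
    define \<theta>' where "\<theta>' = (SOME \<theta>'. \<theta>' \<in> T \<and> a \<theta>' = a \<theta>)"
    have "\<theta>' \<in> T \<and> a \<theta>' = a \<theta>" unfolding \<theta>'_def by (rule someI[of _ \<theta>]) (use that in auto)
    then have h: "\<theta>' \<in> T" "a \<theta>' = a \<theta>" by auto
    have "util (F \<theta>) \<theta> \<ge> util (F \<theta>') \<theta>" "util (F \<theta>') \<theta>' \<ge> util (F \<theta>) \<theta>'"
      using ic that h by auto
    then have "a \<theta> * fst (F \<theta>) = a \<theta> * fst (F \<theta>')" using h(2) unfolding util_def a_def by auto
    then show ?thesis unfolding pay_def \<theta>'_def[symmetric] by simp
  qed
  have opt: "\<theta> * a \<theta> - pay (a \<theta>) \<ge> \<theta> * x - pay x" if thT: "\<theta> \<in> T" and xQ: "x \<in> insert 0 Q" for \<theta> x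
  proof (cases "x = 0")
    case True then show ?thesis using ir[rule_format, OF that(1)] that payeq[OF that(1)]
      by (simp add: pay0 util_def a_def algebra_simps)
  next
    case False then obtain \<theta>' where th': "\<theta>' \<in> T" "x = a \<theta>'" using xQ Q_def by auto
    then show ?thesis using ic[rule_format, OF thT th'(1)] payeq[OF thT] payeq[OF th'(1)]
      by (simp add: util_def a_def algebra_simps)
  qed
  have mono: "\<theta>1 \<le> \<theta>2" if "\<theta>1 \<in> T" "\<theta>2 \<in> T" "a \<theta>1 < a \<theta>2" for \<theta>1 \<theta>2
  proof -
    have "a \<theta>1 \<in> insert 0 Q" "a \<theta>2 \<in> insert 0 Q" using that Q_def by auto
    then show ?thesis using mono_choice[OF opt[OF that(2)] opt[OF that(1)] that(3)] by blast
  qed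
  define xs where "xs = sorted_list_of_set Q"
  define m where "m = length xs"
  have setxs: "set xs = Q" using finQ xs_def by simp
  have sxs: "sorted_wrt (<) xs" unfolding xs_def by (rule strict_sorted_list_of_set)
  define A where "A i = (if i = 0 then 0 else xs ! (i - 1))" for i
  define B where "B i = pay (A i)" for i
  have AQ: "A i \<in> insert 0 Q" if "i \<le> m" for i
    using that setxs by (auto simp: A_def m_def)
  have Astrict: "A i < A j" if "1 \<le> i" "i < j" "j \<le> m" for i j
    using sorted_wrt_nth_less[OF sxs, of "i - 1" "j - 1"] that by (simp add: A_def m_def)
  have Ange: "0 \<le> A i" if "i \<le> m" for i using AQ[OF that] Qr by auto
  have Ale1: "A m \<le> 1" using AQ[of m] Qr by auto
  have chooser: "\<exists>\<theta>\<in>T. a \<theta> = A i" if "1 \<le> i" "i \<le> m" for i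
  proof -
    have "A i \<in> Q" using that setxs by (auto simp: A_def m_def)
    then show ?thesis unfolding Q_def by auto
  qed
  define w where "w j = A (Suc j) - A j" for j
  define p where "p j = (B (Suc j) - B j) / w j" for j
  define h where "h j \<theta> = w j * (if p j \<le> \<theta> then p j * \<gamma> \<theta> else 0)" for j \<theta>
  have pw: "pay (a \<theta>) * \<gamma> \<theta> \<le> (\<Sum>j<m. h j \<theta>)" if th: "\<theta> \<in> T" for \<theta>
  proof -
    have "a \<theta> \<in> set xs" using setxs Q_def th by auto
    then obtain i where i: "i < m" "xs ! i = a \<theta>" by (auto simp: in_set_conv_nth m_def)
    define k where "k = Suc i"
    have k: "1 \<le> k" "k \<le> m" "A k = a \<theta>" using i by (auto simp: k_def A_def)
    have lowt: "h j \<theta> = (B (Suc j) - B j) * \<gamma> \<theta>" if jk: "j < k" for j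
    proof (cases "w j = 0")
      case True
      have "j = 0" using Astrict[of j "Suc j"] jk k True by (force simp: w_def)
      then have "A (Suc j) = 0" using True by (simp add: w_def A_def)
      then show ?thesis using True \<open>j = 0\<close> by (simp add: h_def B_def A_def pay0)
    next
      case False
      have "w j \<ge> 0"
      proof (cases "j = 0")
        case True then show ?thesis using Ange[of 1] k by (simp add: w_def A_def)
      next
        case False then show ?thesis using Astrict[of j "Suc j"] jk k by (simp add: w_def)
      qed
      then have wpos: "w j > 0" using False by simp
      obtain \<theta>' where th': "\<theta>' \<in> T" "a \<theta>' = A (Suc j)" "\<theta>' \<le> \<theta>"
      proof (cases "Suc j = k")
        case True then show ?thesis using that[of \<theta>] th k by simp
      next
        case False
        then obtain \<theta>' where t1: "\<theta>' \<in> T" "a \<theta>' = A (Suc j)" using chooser[of "Suc j"] jk k by auto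
        moreover have "\<theta>' \<le> \<theta>" using mono[OF t1(1) th] Astrict[of "Suc j" k] t1 k jk False by simp
        ultimately show ?thesis using that by blast
      qed
      have "\<theta>' * A (Suc j) - B (Suc j) \<ge> \<theta>' * A j - B j"
        using opt[OF th'(1) AQ[of j]] th'(2) jk k by (simp add: B_def)
      hence "B (Suc j) - B j \<le> \<theta>' * w j" by (simp add: w_def algebra_simps)
      hence "p j \<le> \<theta>'" using wpos by (simp add: p_def pos_divide_le_eq mult.commute)
      hence "p j \<le> \<theta>" using th' by linarith
      then show ?thesis using wpos by (simp add: h_def p_def)
    qed
    have hight: "h j \<theta> \<ge> 0" if jk: "k \<le> j" "j < m" for j
    proof -
      have wpos: "w j > 0" using Astrict[of j "Suc j"] k jk by (simp add: w_def)
      obtain \<theta>'' where th'': "\<theta>'' \<in> T" "a \<theta>'' = A j" "\<theta> \<le> \<theta>''"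
      proof (cases "j = k")
        case True then show ?thesis using that[of \<theta>] th k by simp
      next
        case False
        then obtain \<theta>' where t1: "\<theta>' \<in> T" "a \<theta>' = A j" using chooser[of j] jk k by auto
        moreover have "\<theta> \<le> \<theta>'" using mono[OF th t1(1)] Astrict[of k j] t1 k jk False by simp
        ultimately show ?thesis using that by blast
      qed
      have "\<theta>'' * A j - B j \<ge> \<theta>'' * A (Suc j) - B (Suc j)"
        using opt[OF th''(1) AQ[of "Suc j"]] th''(2) jk by (simp add: B_def)
      hence "\<theta>'' * w j \<le> B (Suc j) - B j" by (simp add: w_def algebra_simps)
      hence "\<theta>'' \<le> p j" using wpos by (simp add: p_def pos_le_divide_eq mult.commute)
      hence "p j > 0" using lo th'' th by (auto simp: T_def)
      moreover have "\<gamma> \<theta> > 0" using gpos th by (auto simp: T_def)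
      ultimately show ?thesis using wpos by (auto simp: h_def)
    qed
    have "(\<Sum>j<m. h j \<theta>) = (\<Sum>j\<in>{0..<k}. h j \<theta>) + (\<Sum>j\<in>{k..<m}. h j \<theta>)"
      using k(2) by (simp add: sum.atLeastLessThan_concat lessThan_atLeast0)
    moreover have "(\<Sum>j\<in>{0..<k}. h j \<theta>) = (\<Sum>j<k. (B (Suc j) - B j) * \<gamma> \<theta>)"
      by (rule sum.cong) (auto simp: lowt)
    moreover have "(\<Sum>j<k. (B (Suc j) - B j) * \<gamma> \<theta>) = (B k - B 0) * \<gamma> \<theta>"
      by (simp add: sum_distrib_right[symmetric] sum_lessThan_telescope)
    moreover have "(B k - B 0) * \<gamma> \<theta> = pay (a \<theta>) * \<gamma> \<theta>" using k by (simp add: B_def A_def pay0)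
    moreover have "(\<Sum>j\<in>{k..<m}. h j \<theta>) \<ge> 0" by (rule sum_nonneg) (auto intro: hight)
    ultimately show ?thesis by linarith
  qed
  have hint: "(h j has_integral (w j * (p j * integral {max (p j) lo..hi} \<gamma>))) T" for j
    unfolding h_def T_def by (rule has_integral_mult_right[OF ind_integral[OF cont]])
  have sumint: "((\<lambda>\<theta>. \<Sum>j<m. h j \<theta>) has_integral (\<Sum>j<m. w j * (p j * integral {max (p j) lo..hi} \<gamma>))) T"
    by (rule has_integral_sum) (auto intro: hint)
  have wnn: "w j \<ge> 0" if "j < m" for j
  proof (cases "j = 0")
    case True then show ?thesis using Ange[of 1] that by (simp add: w_def A_def)
  next
    case False then show ?thesis using Astrict[of j "Suc j"] that by (simp add: w_def)
  qed
  have bound: "(\<Sum>j<m. w j * (p j * integral {max (p j) lo..hi} \<gamma>)) \<le> M"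
  proof -
    have "(\<Sum>j<m. w j * (p j * integral {max (p j) lo..hi} \<gamma>)) \<le> (\<Sum>j<m. w j * M)"
      by (rule sum_mono) (use wnn Mb in \<open>auto intro: mult_left_mono\<close>)
    also have "\<dots> = (A m - A 0) * M"
      by (simp add: sum_distrib_right[symmetric] w_def sum_lessThan_telescope)
    also have "\<dots> \<le> M" using Ale1 Ange[of m] M0 by (simp add: A_def mult_left_le_one_le)
    finally show ?thesis .
  qed
  have reveq: "revenue lo hi \<gamma> F = integral T (\<lambda>\<theta>. pay (a \<theta>) * \<gamma> \<theta>)"
    unfolding revenue_def T_def by (rule integral_cong) (use payeq in \<open>auto simp: a_def T_def\<close>)
  show ?thesis
  proof (cases "(\<lambda>\<theta>. pay (a \<theta>) * \<gamma> \<theta>) integrable_on T")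
    case True
    have "integral T (\<lambda>\<theta>. pay (a \<theta>) * \<gamma> \<theta>) \<le> integral T (\<lambda>\<theta>. \<Sum>j<m. h j \<theta>)"
      by (rule integral_le[OF True]) (use sumint pw in auto)
    also have "\<dots> = (\<Sum>j<m. w j * (p j * integral {max (p j) lo..hi} \<gamma>))"
      using sumint by (rule integral_unique)
    finally show ?thesis using reveq bound by linarith
  next
    case False then show ?thesis using reveq M0 by (simp add: not_integrable_integral)
  qed
qed

theorem mainTheorem19:
  fixes lo hi :: real and \<gamma> :: "real \<Rightarrow> real"
  assumes "0 < lo" and "lo < hi"
    and "continuous_on {lo..hi} \<gamma>"
    and "\<And>x. x \<in> {lo..hi} \<Longrightarrow> \<gamma> x > 0"
    and "integral {lo..hi} \<gamma> = 1"
    and "\<And>x y. lo \<le> x \<Longrightarrow> x < y \<Longrightarrow> y < hi \<Longrightarrow>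
           \<gamma> x / (1 - cdf lo \<gamma> x) \<le> \<gamma> y / (1 - cdf lo \<gamma> y)"
  shows "\<exists>Fs. admissible lo hi Fs \<and>
           (\<forall>F. admissible lo hi F \<longrightarrow> revenue lo hi \<gamma> F \<le> revenue lo hi \<gamma> Fs) \<and>
           (\<exists>\<theta>s\<in>{lo..hi}. (\<forall>\<theta>\<in>{lo..\<theta>s}. Fs \<theta> = (0, 0)) \<and>
                           (\<forall>\<theta>\<in>{\<theta>s<..hi}. Fs \<theta> = (\<theta>s, 1)))"
proof -
  note lo = assms(1) and lohi = assms(2) and cont = assms(3) and gpos = assms(4) and one = assms(5)
  define R where "R s = s * integral {s..hi} \<gamma>" for s
  have "continuous_on {lo..hi} R" unfolding R_def
    by (intro continuous_on_mult continuous_on_id indefinite_integral_continuous_1'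
        integrable_continuous_real cont)
  then obtain ts where ts: "ts \<in> {lo..hi}" "\<And>y. y \<in> {lo..hi} \<Longrightarrow> R y \<le> R ts"
    using continuous_attains_sup[of "{lo..hi}" R] lohi by auto
  define M where "M = R ts"
  have RloM: "lo \<le> M" using ts(2)[of lo] lohi one by (simp add: M_def R_def)
  have M0: "M \<ge> 0" using RloM lo by simp
  have Mb: "p * integral {max p lo..hi} \<gamma> \<le> M" for p
  proof (cases "p \<le> lo")
    case True then show ?thesis using one RloM by (simp add: max_def)
  next
    case False
    show ?thesis
    proof (cases "p \<le> hi")
      case True then show ?thesis using False ts(2)[of p] by (simp add: max_def M_def R_def)
    next
      case False2: False
      then show ?thesis using False M0 by (simp add: max_def)
    qed
  qed
  define Fs where "Fs \<theta> = (if \<theta> \<le> ts then (0::real, 0::real) else (ts, 1))" for \<theta>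
  have adm: "admissible lo hi Fs"
  proof -
    have "Fs ` {lo..hi} \<subseteq> {(0, 0), (ts, 1)}" by (auto simp: Fs_def)
    hence "finite (Fs ` {lo..hi})" by (rule finite_subset) simp
    moreover have "Fs ` {lo..hi} \<subseteq> {0..hi} \<times> {0..1}" using ts lo by (auto simp: Fs_def)
    ultimately show ?thesis unfolding admissible_def
      by (auto simp: Fs_def util_def)
  qed
  have rev: "revenue lo hi \<gamma> Fs = M"
  proof -
    have "((\<lambda>\<theta>. if ts \<le> \<theta> then ts * \<gamma> \<theta> else 0) has_integral (ts * integral {max ts lo..hi} \<gamma>)) {lo..hi}"
      by (rule ind_integral[OF cont])
    hence "((\<lambda>\<theta>. snd (Fs \<theta>) * fst (Fs \<theta>) * \<gamma> \<theta>) has_integral (ts * integral {max ts lo..hi} \<gamma>)) {lo..hi}"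
      by (rule has_integral_spike[OF negligible_sing[of ts], rotated]) (auto simp: Fs_def)
    hence "revenue lo hi \<gamma> Fs = ts * integral {max ts lo..hi} \<gamma>"
      unfolding revenue_def by (rule integral_unique)
    moreover have "max ts lo = ts" using ts by simp
    ultimately show ?thesis by (simp add: M_def R_def)
  qed
  show ?thesis
  proof (intro exI[of _ Fs] conjI allI impI bexI[of _ ts])
    show "admissible lo hi Fs" by (rule adm)
    show "revenue lo hi \<gamma> F \<le> revenue lo hi \<gamma> Fs" if "admissible lo hi F" for F
      using rev_bound[OF lo cont gpos that Mb M0] rev by simp
    show "\<forall>\<theta>\<in>{lo..ts}. Fs \<theta> = (0, 0)" by (auto simp: Fs_def)
    show "\<forall>\<theta>\<in>{ts<..hi}. Fs \<theta> = (ts, 1)" by (auto simp: Fs_def)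
    show "ts \<in> {lo..hi}" by (rule ts)
  qed
qed

end
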